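(* Let $n\geq 2$ and let $\Omega\subset\mathbb R^n$ be a bounded convex domain with $0\in\partial\Omega$ and $\Omega\subset\{x=(x',x_n)\in\mathbb R^n: x_n>0\}$. For $\alpha\in(0,1)$ define on $\Omega$ $$v_\alpha(x)=x_n^{\alpha}\,(|x'|^2-C_\alpha),\qquad C_\alpha=\frac{1+2[\mathrm{diam}\,\Omega]^2}{\alpha(1-\alpha)}.$$ Then: (i) $v_\alpha$ is convex in $\Omega$, $v_\alpha\leq 0$ on $\partial\Omega$, and $\det D^2 v_\alpha(x)\geq 2x_n^{n\alpha-2}$ for all $x\in\Omega$; (ii) if $p>0$, then $\det D^2 v_{\frac{2}{n+p}}>|v_{\frac{2}{n+p}}|^{-p}$ in $\Omega$.
   Context: Points of $\mathbb R^n$ are written $x=(x',x_n)$ with $x'\in\mathbb R^{n-1}$; $\mathrm{diam}\,\Omega$ is the diameter of $\Omega$. *)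

theory Defs
  imports "HOL-Analysis.Analysis"
begin

definition partial :: "'n::finite \<Rightarrow> (real^'n \<Rightarrow> real) \<Rightarrow> real^'n \<Rightarrow> real" where
  "partial i f x = deriv (\<lambda>t. f (x + t *\<^sub>R axis i 1)) 0"

definition hessian :: "(real^'n::finite \<Rightarrow> real) \<Rightarrow> real^'n \<Rightarrow> real^'n^'n" where
  "hessian f x = (\<chi> i j. partial i (partial j f) x)"

definition C_alpha :: "(real^'n::finite) set \<Rightarrow> real \<Rightarrow> real" where
  "C_alpha \<Omega> \<alpha> = (1 + 2 * (diameter \<Omega>)\<^sup>2) / (\<alpha> * (1 - \<alpha>))"

text \<open>v_alpha(x) = x_n^alpha (|x'|^2 - C_alpha), where the coordinate k plays the role of x_n
  and x' consists of all other coordinates.\<close>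
definition v_alpha :: "(real^'n::finite) set \<Rightarrow> 'n \<Rightarrow> real \<Rightarrow> real^'n \<Rightarrow> real" where
  "v_alpha \<Omega> k \<alpha> x = (x $ k) powr \<alpha> * ((\<Sum>i\<in>UNIV - {k}. (x $ i)\<^sup>2) - C_alpha \<Omega> \<alpha>)"

end

theory Submission imports Defs begin


lemma det_elim:
  fixes A :: "real^'n^'n"
  assumes a: "a \<noteq> 0" and D: "\<And>i j. i\<noteq>k \<Longrightarrow> j\<noteq>k \<Longrightarrow> A$i$j = (if i = j then a else 0)"
  shows "det A = det (\<chi> i j. if i = k then (if j = k then A$k$k - (\<Sum>l\<in>UNIV-{k}. A$k$l * A$l$k / a) else 0) else A$i$j)"
proof -
  define x where "x = (\<Sum>l\<in>UNIV-{k}. (-(A$k$l / a)) *s row l A)"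
  have xs: "x \<in> vec.span {row j A |j. j \<noteq> k}"
  proof -
    have sp: "c *s row l A \<in> vec.span {row j A |j. j \<noteq> k}" if "l \<noteq> k" for c l
      by (rule vec.span_scale, rule vec.span_base) (use that in blast)
    show ?thesis unfolding x_def by (rule vec.span_sum, rule sp) auto
  qed
  have xj: "x $ j = (\<Sum>l\<in>UNIV-{k}. (-(A$k$l / a)) * A$l$j)" for j
    unfolding x_def by (simp add: sum_component row_def)
  have eq: "(\<chi> i. if i = k then row k A + x else row i A) = (\<chi> i j. if i = k then (if j = k then A$k$k - (\<Sum>l\<in>UNIV-{k}. A$k$l * A$l$k / a) else 0) else A$i$j)"
  proof (subst vec_eq_iff, intro allI, subst vec_eq_iff, intro allI)
    fix i j
    show "(\<chi> i. if i = k then row k A + x else row i A) $ i $ j = (\<chi> i j. if i = k then (if j = k then A$k$k - (\<Sum>l\<in>UNIV-{k}. A$k$l * A$l$k / a) else 0) else A$i$j) $ i $ j"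
    proof (cases "i = k")
      case False then show ?thesis by (simp add: row_def)
    next
      case True
      show ?thesis
      proof (cases "j = k")
        case True
        then show ?thesis using \<open>i = k\<close> by (simp add: row_def xj sum_negf)
      next
        case False
        have "(\<Sum>l\<in>UNIV-{k}. (-(A$k$l / a)) * A$l$j) = (\<Sum>l\<in>UNIV-{k}. if l = j then -(A$k$l / a) * a else 0)"
          by (rule sum.cong) (use False D in auto)
        also have "\<dots> = - A$k$j" using False a by (simp add: sum.delta)
        finally show ?thesis using True False by (simp add: row_def xj)
      qed
    qed
  qed
  show ?thesis using det_row_span[OF xs] eq by simp
qed

lemma det_arrow:
  fixes A :: "real^'n^'n"
  assumes a: "a \<noteq> 0" and D: "\<And>i j. i\<noteq>k \<Longrightarrow> j\<noteq>k \<Longrightarrow> A$i$j = (if i = j then a else 0)"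
  shows "det A = a ^ (CARD('n) - 1) * (A$k$k - (\<Sum>l\<in>UNIV-{k}. A$k$l * A$l$k / a))"
proof -
  define M where "M = (\<chi> i j. if i = k then (if j = k then A$k$k - (\<Sum>l\<in>UNIV-{k}. A$k$l * A$l$k / a) else 0) else A$i$j)"
  have 1: "det A = det M" unfolding M_def by (rule det_elim[OF a D])
  have D2: "transpose M $ i $ j = (if i = j then a else 0)" if "i \<noteq> k" "j \<noteq> k" for i j
    using that D by (auto simp: M_def transpose_def)
  define N where "N = (\<chi> i j. if i = k then (if j = k then transpose M$k$k - (\<Sum>l\<in>UNIV-{k}. transpose M$k$l * transpose M$l$k / a) else 0) else transpose M$i$j)"
  have 2: "det M = det N" unfolding N_def det_transpose[of M, symmetric] by (rule det_elim[OF a D2])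
  have Nd: "N$i$j = 0" if "i \<noteq> j" for i j
    using that D by (auto simp: N_def M_def transpose_def)
  have 3: "det N = prod (\<lambda>i. N$i$i) UNIV" by (rule det_diagonal[OF Nd])
  have Nkk: "N$k$k = A$k$k - (\<Sum>l\<in>UNIV-{k}. A$k$l * A$l$k / a)"
    by (simp add: N_def M_def transpose_def)
  have "prod (\<lambda>i. N$i$i) UNIV = N$k$k * prod (\<lambda>i. N$i$i) (UNIV - {k})"
    by (simp add: prod.remove)
  also have "prod (\<lambda>i. N$i$i) (UNIV - {k}) = prod (\<lambda>i. a) (UNIV - {k})"
    by (rule prod.cong) (use D in \<open>auto simp: N_def M_def transpose_def\<close>)
  also have "\<dots> = a ^ (CARD('n) - 1)" by (simp add: card_Diff_singleton)
  finally show ?thesis using 1 2 3 Nkk by simp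
qed


lemma line_comp: "(x + t *\<^sub>R axis i 1) $ l = x$l + (if l = i then t else 0)"
  by (simp add: axis_def)

lemma S_line:
  fixes x :: "real^'n"
  shows "(\<Sum>l\<in>UNIV-{k}. ((x + t *\<^sub>R axis i 1)$l)\<^sup>2) =
    (\<Sum>l\<in>UNIV-{k}. (x$l)\<^sup>2) + (if i = k then 0 else 2*t*x$i + t\<^sup>2)"
proof -
  have "(\<Sum>l\<in>UNIV-{k}. ((x + t *\<^sub>R axis i 1)$l)\<^sup>2) =
     (\<Sum>l\<in>UNIV-{k}. (x$l)\<^sup>2 + (if l = i then 2*t*x$i + t\<^sup>2 else 0))"
    by (rule sum.cong) (auto simp: line_comp axis_def power2_eq_square algebra_simps)
  also have "\<dots> = (\<Sum>l\<in>UNIV-{k}. (x$l)\<^sup>2) + (if i = k then 0 else 2*t*x$i + t\<^sup>2)"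
    by (simp add: sum.distrib sum.delta)
  finally show ?thesis .
qed

definition g1 :: "(real^'n::finite) set \<Rightarrow> 'n \<Rightarrow> real \<Rightarrow> 'n \<Rightarrow> real^'n \<Rightarrow> real" where
  "g1 \<Omega> k \<alpha> j y = (if j = k then \<alpha> * (y$k) powr (\<alpha>-1) * ((\<Sum>l\<in>UNIV-{k}. (y$l)\<^sup>2) - C_alpha \<Omega> \<alpha>)
      else 2 * (y$k) powr \<alpha> * y$j)"

lemma partial1:
  fixes x :: "real^'n"
  assumes xk: "x$k > 0"
  shows "partial j (v_alpha \<Omega> k \<alpha>) x = g1 \<Omega> k \<alpha> j x"
proof -
  define S where "S = (\<Sum>l\<in>UNIV-{k}. (x$l)\<^sup>2)"
  define C where "C = C_alpha \<Omega> \<alpha>"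
  have "((\<lambda>t. v_alpha \<Omega> k \<alpha> (x + t *\<^sub>R axis j 1)) has_real_derivative g1 \<Omega> k \<alpha> j x) (at 0)"
  proof (cases "j = k")
    case True
    have f: "(\<lambda>t. v_alpha \<Omega> k \<alpha> (x + t *\<^sub>R axis j 1)) = (\<lambda>t. (x$k + t) powr \<alpha> * (S - C))"
      using True by (intro ext, simp only: v_alpha_def S_line) (auto simp: line_comp axis_def S_def C_def)
    have "((\<lambda>t. (x$k + t) powr \<alpha> * (S - C)) has_real_derivative (\<alpha> * (x$k + 0) powr (\<alpha> - of_nat 1) * 1) * (S - C)) (at 0)"
      by (intro DERIV_cmult_right DERIV_fun_powr derivative_eq_intros) (use xk in auto)
    then show ?thesis unfolding f using True by (simp add: g1_def S_def C_def)
  next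
    case False
    have f: "(\<lambda>t. v_alpha \<Omega> k \<alpha> (x + t *\<^sub>R axis j 1)) = (\<lambda>t. (x$k) powr \<alpha> * (S + (2*t*x$j + t\<^sup>2) - C))"
      using False by (intro ext, simp only: v_alpha_def S_line) (auto simp: line_comp axis_def S_def C_def)
    have "((\<lambda>t. (x$k) powr \<alpha> * (S + (2*t*x$j + t\<^sup>2) - C)) has_real_derivative (x$k) powr \<alpha> * (2 * x$j)) (at 0)"
      by (auto intro!: derivative_eq_intros)
    then show ?thesis unfolding f using False by (simp add: g1_def S_def C_def mult_ac)
  qed
  then show ?thesis unfolding partial_def by (rule DERIV_imp_deriv)
qed

lemma partial2:
  fixes x :: "real^'n"
  assumes xk: "x$k > 0"
  shows "partial i (partial j (v_alpha \<Omega> k \<alpha>)) x =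
    (if i = k \<and> j = k then \<alpha>*(\<alpha>-1) * (x$k) powr (\<alpha>-2) * ((\<Sum>l\<in>UNIV-{k}. (x$l)\<^sup>2) - C_alpha \<Omega> \<alpha>)
     else if i = k then 2*\<alpha> * (x$k) powr (\<alpha>-1) * x$j
     else if j = k then 2*\<alpha> * (x$k) powr (\<alpha>-1) * x$i
     else if i = j then 2 * (x$k) powr \<alpha> else 0)" (is "_ = ?R")
proof -
  define S where "S = (\<Sum>l\<in>UNIV-{k}. (x$l)\<^sup>2)"
  define C where "C = C_alpha \<Omega> \<alpha>"
  have comp: "(x + t *\<^sub>R axis i 1)$k > 0" if "t \<in> {-(x$k)<..}" for t
    using that xk by (auto simp: line_comp axis_def)
  have D: "((\<lambda>t. g1 \<Omega> k \<alpha> j (x + t *\<^sub>R axis i 1)) has_real_derivative ?R) (at 0)"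
  proof (cases "j = k")
    case jk: True
    show ?thesis
    proof (cases "i = k")
      case True
      have f: "(\<lambda>t. g1 \<Omega> k \<alpha> j (x + t *\<^sub>R axis i 1)) = (\<lambda>t. \<alpha> * (x$k + t) powr (\<alpha>-1) * (S - C))"
        using True jk by (intro ext, simp only: g1_def S_line) (auto simp: line_comp axis_def S_def C_def)
      have "((\<lambda>t. \<alpha> * ((x$k + t) powr (\<alpha>-1) * (S - C))) has_real_derivative \<alpha> * (((\<alpha>-1) * (x$k + 0) powr (\<alpha> - 1 - of_nat 1) * 1) * (S - C))) (at 0)"
        by (intro DERIV_cmult DERIV_cmult_right DERIV_fun_powr derivative_eq_intros) (use xk in auto)
      then show ?thesis unfolding f using True jk by (simp add: S_def C_def mult.assoc)
    next
      case False
      have f: "(\<lambda>t. g1 \<Omega> k \<alpha> j (x + t *\<^sub>R axis i 1)) = (\<lambda>t. \<alpha> * (x$k) powr (\<alpha>-1) * (S + (2*t*x$i + t\<^sup>2) - C))"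
        using False jk by (intro ext, simp only: g1_def S_line) (auto simp: line_comp axis_def S_def C_def)
      have "((\<lambda>t. \<alpha> * (x$k) powr (\<alpha>-1) * (S + (2*t*x$i + t\<^sup>2) - C)) has_real_derivative \<alpha> * (x$k) powr (\<alpha>-1) * (2 * x$i)) (at 0)"
        by (auto intro!: derivative_eq_intros)
      then show ?thesis unfolding f using False jk by (simp add: mult_ac)
    qed
  next
    case jk: False
    show ?thesis
    proof (cases "i = k")
      case True
      have f: "(\<lambda>t. g1 \<Omega> k \<alpha> j (x + t *\<^sub>R axis i 1)) = (\<lambda>t. 2 * (x$k + t) powr \<alpha> * x$j)"
        using True jk by (auto simp: g1_def line_comp axis_def)
      have "((\<lambda>t. 2 * ((x$k + t) powr \<alpha> * x$j)) has_real_derivative 2 * ((\<alpha> * (x$k + 0) powr (\<alpha> - of_nat 1) * 1) * x$j)) (at 0)"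
        by (intro DERIV_cmult DERIV_cmult_right DERIV_fun_powr derivative_eq_intros) (use xk in auto)
      then show ?thesis unfolding f using True jk by (simp add: mult_ac)
    next
      case False
      have f: "(\<lambda>t. g1 \<Omega> k \<alpha> j (x + t *\<^sub>R axis i 1)) = (\<lambda>t. 2 * (x$k) powr \<alpha> * (x$j + (if j = i then t else 0)))"
        using False jk by (auto simp: g1_def line_comp axis_def)
      show ?thesis
      proof (cases "i = j")
        case True
        have "((\<lambda>t. 2 * (x$k) powr \<alpha> * (x$j + t)) has_real_derivative 2 * (x$k) powr \<alpha> * 1) (at 0)"
          by (auto intro!: derivative_eq_intros)
        then show ?thesis unfolding f using False jk True by simp
      next
        case ij: False
        show ?thesis unfolding f using False jk ij by simp
      qed
    qed
  qed
  have D2: "((\<lambda>t. partial j (v_alpha \<Omega> k \<alpha>) (x + t *\<^sub>R axis i 1)) has_real_derivative ?R) (at 0)"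
    by (rule has_field_derivative_transform_within_open[OF D, of "{-(x$k)<..}"])
       (use xk partial1[OF comp] in auto)
  then show ?thesis unfolding partial_def by (rule DERIV_imp_deriv)
qed


lemma line_convex:
  fixes L :: "'a set" and p q :: "'a \<Rightarrow> real"
  assumes fin: "finite L"
    and u: "\<And>s. s \<in> {0..1} \<Longrightarrow> a + s*b > 0"
    and bnd: "\<And>s. s \<in> {0..1} \<Longrightarrow> (\<Sum>l\<in>L. (p l + s*q l)\<^sup>2) \<le> d\<^sup>2"
    and al: "0 < \<alpha>" "\<alpha> < 1"
    and CC: "\<alpha> * (1 - \<alpha>) * C = 1 + 2 * d\<^sup>2"
  shows "convex_on {0..1} (\<lambda>s. (a+s*b) powr \<alpha> * ((\<Sum>l\<in>L. (p l + s*q l)\<^sup>2) - C))"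
proof -
  define U where "U s = a + s*b" for s
  define W where "W s = (\<Sum>l\<in>L. (p l + s*q l)\<^sup>2) - C" for s
  define W' where "W' s = (\<Sum>l\<in>L. 2 * (p l + s*q l) * q l)" for s
  define W'' where "W'' = (\<Sum>l\<in>L. 2 * q l * q l)"
  define f' where "f' s = \<alpha> * U s powr (\<alpha>-1) * b * W s + U s powr \<alpha> * W' s" for s
  define f'' where "f'' s = \<alpha> * (\<alpha>-1) * U s powr (\<alpha>-2) * b * b * W s + \<alpha> * U s powr (\<alpha>-1) * b * W' s
      + (\<alpha> * U s powr (\<alpha>-1) * b * W' s + U s powr \<alpha> * W'')" for s
  have dU: "DERIV U s :> b" for s unfolding U_def by (auto intro!: derivative_eq_intros)
  have dW: "DERIV W s :> W' s" for s
    unfolding W_def W'_def by (auto intro!: derivative_eq_intros simp: power2_eq_square algebra_simps)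
  have dW': "DERIV W' s :> W''" for s
    unfolding W'_def W''_def by (auto intro!: derivative_eq_intros simp: algebra_simps)
  have d1: "DERIV (\<lambda>s. U s powr \<alpha> * W s) s :> f' s" if "s \<in> {0..1}" for s
    apply (rule DERIV_cong)
     apply (rule DERIV_mult'[OF DERIV_fun_powr[OF dU] dW])
    using u that apply (simp add: U_def)
    apply (simp add: f'_def algebra_simps)
    done
  have d2: "DERIV f' s :> f'' s" if "s \<in> {0..1}" for s
  proof -
    have p1: "DERIV (\<lambda>s. U s powr (\<alpha>-1)) s :> (\<alpha>-1) * U s powr (\<alpha> - 1 - of_nat 1) * b"
      by (intro DERIV_fun_powr dU) (use u that in \<open>simp add: U_def\<close>)
    have p0: "DERIV (\<lambda>s. U s powr \<alpha>) s :> \<alpha> * U s powr (\<alpha> - of_nat 1) * b"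
      by (intro DERIV_fun_powr dU) (use u that in \<open>simp add: U_def\<close>)
    have f'eq: "f' = (\<lambda>s. (\<alpha>*b) * (U s powr (\<alpha>-1) * W s) + U s powr \<alpha> * W' s)"
      by (simp add: f'_def[abs_def] mult_ac)
    show ?thesis
      unfolding f'eq
      apply (rule DERIV_cong)
       apply (rule DERIV_add[OF DERIV_cmult[OF DERIV_mult'[OF p1 dW]] DERIV_mult'[OF p0 dW']])
      apply (simp add: f''_def algebra_simps)
      done
  qed
  have nn: "f'' s \<ge> 0" if s: "s \<in> {0..1}" for s
  proof -
    define y where "y l = p l + s * q l" for l
    define A where "A = (\<Sum>l\<in>L. (y l)\<^sup>2)"
    define B where "B = (\<Sum>l\<in>L. y l * q l)"
    define D where "D = (\<Sum>l\<in>L. q l * q l)"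
    have Upos: "U s > 0" using u[OF s] by (simp add: U_def)
    define P where "P = U s powr (\<alpha> - 2)"
    have Ppos: "P > 0" using Upos by (simp add: P_def)
    have P1: "U s powr (\<alpha>-1) = P * U s"
      using Upos powr_add[of "U s" "\<alpha>-2" 1] by (simp add: P_def)
    have P0: "U s powr \<alpha> = P * U s * U s"
      using Upos powr_add[of "U s" "\<alpha>-2" 2] by (simp add: P_def power2_eq_square mult.assoc)
    have WW: "W s = A - C" "W' s = 2 * B" "W'' = 2 * D"
      by (simp_all add: W_def W'_def W''_def A_def B_def D_def y_def sum_distrib_left algebra_simps)
    have A0: "A \<ge> 0" unfolding A_def by (intro sum_nonneg) auto
    have Ad: "A \<le> d\<^sup>2" using bnd[OF s] by (simp add: A_def y_def)
    have sq: "0 \<le> (\<Sum>l\<in>L. (U s * q l + \<alpha> * b * y l)\<^sup>2)" by (intro sum_nonneg) auto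
    also have "\<dots> = (U s)\<^sup>2 * D + 2 * \<alpha> * U s * b * B + \<alpha>\<^sup>2 * b\<^sup>2 * A"
      by (simp add: A_def B_def D_def power2_eq_square algebra_simps sum.distrib sum_distrib_left)
    finally have sq': "0 \<le> (U s)\<^sup>2 * D + 2 * \<alpha> * U s * b * B + \<alpha>\<^sup>2 * b\<^sup>2 * A" .
    have f''eq: "f'' s = P * (\<alpha> * (\<alpha>-1) * b\<^sup>2 * (A - C) + 4 * \<alpha> * U s * b * B + 2 * (U s)\<^sup>2 * D)"
      unfolding f''_def P_def[symmetric] P1 P0 WW by (simp add: power2_eq_square algebra_simps)
    have aa: "\<alpha> + \<alpha>\<^sup>2 \<le> 2" using al by (simp add: power2_eq_square) (smt (verit) mult_left_le_one_le)
    have "(\<alpha> + \<alpha>\<^sup>2) * A \<le> 2 * d\<^sup>2"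
      using mult_mono[OF aa Ad] A0 by (simp add: power2_eq_square)
    then have E: "\<alpha> * (1-\<alpha>) * C - \<alpha>*(1-\<alpha>) * A - 2 * \<alpha>\<^sup>2 * A \<ge> 0"
      using CC by (simp add: power2_eq_square algebra_simps)
    have "\<alpha> * (\<alpha>-1) * b\<^sup>2 * (A - C) + 4 * \<alpha> * U s * b * B + 2 * (U s)\<^sup>2 * D
        \<ge> b\<^sup>2 * (\<alpha> * (1-\<alpha>) * C - \<alpha>*(1-\<alpha>) * A - 2 * \<alpha>\<^sup>2 * A)"
      using sq' by (simp add: algebra_simps power2_eq_square)
    moreover have "b\<^sup>2 * (\<alpha> * (1-\<alpha>) * C - \<alpha>*(1-\<alpha>) * A - 2 * \<alpha>\<^sup>2 * A) \<ge> 0"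
      using E by simp
    ultimately show ?thesis unfolding f''eq using Ppos by simp
  qed
  have "convex_on {0..1} (\<lambda>s. U s powr \<alpha> * W s)"
    by (rule f''_ge0_imp_convex[OF convex_real_interval(5) d1 d2 nn])
  then show ?thesis by (simp add: U_def W_def)
qed


lemma part1:
  fixes \<Omega> :: "(real^'n) set" and k :: 'n
  assumes bdd: "bounded \<Omega>" and cvx: "convex \<Omega>"
    and bd0: "0 \<in> frontier \<Omega>" and opn: "open \<Omega>"
    and half: "\<Omega> \<subseteq> {x. x $ k > 0}"
    and al: "0 < \<alpha>" "\<alpha> < 1" and n2: "CARD('n) \<ge> 2"
  shows "convex_on \<Omega> (v_alpha \<Omega> k \<alpha>)"
    and "\<forall>x\<in>frontier \<Omega>. v_alpha \<Omega> k \<alpha> x \<le> 0"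
    and "\<forall>x\<in>\<Omega>. det (hessian (v_alpha \<Omega> k \<alpha>) x) \<ge> 2 * (x $ k) powr (real CARD('n) * \<alpha> - 2)"
    and "\<forall>x\<in>closure \<Omega>. C_alpha \<Omega> \<alpha> - (\<Sum>l\<in>UNIV-{k}. (x$l)\<^sup>2) > 1"
proof -
  define d where "d = diameter \<Omega>"
  define C where "C = C_alpha \<Omega> \<alpha>"
  have Abnd: "(\<Sum>l\<in>UNIV-{k}. (y$l)\<^sup>2) \<le> d\<^sup>2" if y: "y \<in> closure \<Omega>" for y
  proof -
    have "(\<Sum>l\<in>UNIV-{k}. (y$l)\<^sup>2) \<le> (\<Sum>l\<in>UNIV. (y$l)\<^sup>2)"
      by (rule sum_mono2) auto
    also have "\<dots> = (norm y)\<^sup>2"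
      unfolding power2_norm_eq_inner by (simp add: inner_vec_def power2_eq_square)
    also have "norm y \<le> d"
    proof -
      have "0 \<in> closure \<Omega>" using bd0 by (simp add: frontier_def)
      then have "dist y 0 \<le> diameter (closure \<Omega>)"
        using y bdd by (intro diameter_bounded_bound) auto
      then show ?thesis using diameter_closure[OF bdd] by (simp add: d_def)
    qed
    then have "(norm y)\<^sup>2 \<le> d\<^sup>2" by (intro power_mono) auto
    finally show ?thesis .
  qed
  have A0: "0 \<le> (\<Sum>l\<in>UNIV-{k}. (y$l)\<^sup>2)" for y :: "real^'n" by (intro sum_nonneg) auto
  have aa: "\<alpha> * (1 - \<alpha>) > 0" using al by simp
  have CC: "\<alpha> * (1 - \<alpha>) * C = 1 + 2 * d\<^sup>2"
    using al by (simp add: C_def C_alpha_def d_def)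
  have a4: "\<alpha> * (1 - \<alpha>) \<le> 1/4"
    using zero_le_power2[of "2*\<alpha> - 1"] by (simp add: power2_eq_square algebra_simps)
  have Cpos: "C > 0" using CC aa by (smt (verit) zero_le_power2 zero_less_mult_iff)
  have Cbig: "C \<ge> 4 * (1 + 2 * d\<^sup>2)"
  proof -
    have "1 + 2 * d\<^sup>2 \<le> (1/4) * C" using CC mult_right_mono[OF a4 less_imp_le[OF Cpos]] by simp
    then show ?thesis by simp
  qed
  show big: "\<forall>x\<in>closure \<Omega>. C_alpha \<Omega> \<alpha> - (\<Sum>l\<in>UNIV-{k}. (x$l)\<^sup>2) > 1"
  proof
    fix x assume "x \<in> closure \<Omega>"
    from Abnd[OF this] Cbig show "C_alpha \<Omega> \<alpha> - (\<Sum>l\<in>UNIV-{k}. (x$l)\<^sup>2) > 1"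
      unfolding C_def by (smt (verit) zero_le_power2)
  qed
  have pos: "y$k > 0" if "y \<in> \<Omega>" for y using half that by auto
  have cl0: "y$k \<ge> 0" if "y \<in> closure \<Omega>" for y
  proof -
    have "closure \<Omega> \<subseteq> {x. 0 \<le> x$k}"
      by (rule closure_minimal) (use half in \<open>auto intro!: closed_Collect_le continuous_intros\<close>)
    then show ?thesis using that by auto
  qed
  show "\<forall>x\<in>frontier \<Omega>. v_alpha \<Omega> k \<alpha> x \<le> 0"
  proof
    fix x assume "x \<in> frontier \<Omega>"
    then have xc: "x \<in> closure \<Omega>" by (simp add: frontier_def)
    have "(\<Sum>l\<in>UNIV-{k}. (x$l)\<^sup>2) - C_alpha \<Omega> \<alpha> < 0" using big xc by fastforce
    moreover have "(x$k) powr \<alpha> \<ge> 0" by simp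
    ultimately show "v_alpha \<Omega> k \<alpha> x \<le> 0" unfolding v_alpha_def
      by (simp add: mult_nonneg_nonpos)
  qed
  show "convex_on \<Omega> (v_alpha \<Omega> k \<alpha>)"
  proof (rule convex_onI[OF _ cvx])
    fix t :: real and x z assume t: "0 < t" "t < 1" and x: "x \<in> \<Omega>" and z: "z \<in> \<Omega>"
    define \<phi> where "\<phi> s = (x$k + s*(z$k - x$k)) powr \<alpha> * ((\<Sum>l\<in>UNIV-{k}. (x$l + s*(z$l - x$l))\<^sup>2) - C)" for s
    have seg: "(1 - s) *\<^sub>R x + s *\<^sub>R z \<in> \<Omega>" if "s \<in> {0..1}" for s
      using that by (intro convexD[OF cvx x z]) auto
    have comp: "((1 - s) *\<^sub>R x + s *\<^sub>R z) $ l = x$l + s*(z$l - x$l)" for s l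
      by (simp add: algebra_simps)
    have vphi: "v_alpha \<Omega> k \<alpha> ((1 - s) *\<^sub>R x + s *\<^sub>R z) = \<phi> s" for s
      unfolding v_alpha_def \<phi>_def comp C_def ..
    have lc: "convex_on {0..1} \<phi>"
      unfolding \<phi>_def
    proof (rule line_convex[OF _ _ _ al CC])
      show "finite (UNIV - {k})" by simp
      fix s :: real assume s: "s \<in> {0..1}"
      show "x$k + s*(z$k - x$k) > 0" using pos[OF seg[OF s]] by (simp add: algebra_simps)
      show "(\<Sum>l\<in>UNIV-{k}. (x$l + s*(z$l - x$l))\<^sup>2) \<le> d\<^sup>2"
        using Abnd[OF closure_subset[THEN subsetD, OF seg[OF s]]] unfolding comp by simp
    qed
    have "\<phi> ((1 - t) *\<^sub>R 0 + t *\<^sub>R 1) \<le> (1 - t) * \<phi> 0 + t * \<phi> 1"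
      by (rule convex_onD_Icc[OF lc]) (use t in auto)
    moreover have "\<phi> 0 = v_alpha \<Omega> k \<alpha> x" using vphi[of 0] by simp
    moreover have "\<phi> 1 = v_alpha \<Omega> k \<alpha> z" using vphi[of 1] by simp
    ultimately show "v_alpha \<Omega> k \<alpha> ((1 - t) *\<^sub>R x + t *\<^sub>R z) \<le> (1 - t) * v_alpha \<Omega> k \<alpha> x + t * v_alpha \<Omega> k \<alpha> z"
      using vphi[of t] by simp
  qed
  show "\<forall>x\<in>\<Omega>. det (hessian (v_alpha \<Omega> k \<alpha>) x) \<ge> 2 * (x $ k) powr (real CARD('n) * \<alpha> - 2)"
  proof
    fix x assume x: "x \<in> \<Omega>"
    define t where "t = x$k"
    have tpos: "t > 0" using pos[OF x] by (simp add: t_def)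
    define A where "A = (\<Sum>l\<in>UNIV-{k}. (x$l)\<^sup>2)"
    define P where "P = t powr (\<alpha> - 2)"
    have Ppos: "P > 0" using tpos by (simp add: P_def)
    have P1: "t powr (\<alpha>-1) = P * t"
      using tpos powr_add[of t "\<alpha>-2" 1] by (simp add: P_def)
    have P0: "t powr \<alpha> = P * t * t"
      using tpos powr_add[of t "\<alpha>-2" 2] by (simp add: P_def power2_eq_square mult.assoc)
    define H where "H = hessian (v_alpha \<Omega> k \<alpha>) x"
    have H: "H $ i $ j = (if i = k \<and> j = k then \<alpha>*(\<alpha>-1) * P * (A - C)
     else if i = k then 2*\<alpha> * P * t * x$j
     else if j = k then 2*\<alpha> * P * t * x$i
     else if i = j then 2 * P * t * t else 0)" for i j
      unfolding H_def hessian_def using partial2[OF pos[OF x], of i j \<Omega> \<alpha>]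
      unfolding t_def[symmetric] A_def[symmetric] C_def[symmetric] P1 P0 P_def[symmetric] by (simp add: mult.assoc)
    define a where "a = 2 * P * t * t"
    have a0: "a \<noteq> 0" using Ppos tpos by (simp add: a_def)
    have "det H = a ^ (CARD('n) - 1) * (H$k$k - (\<Sum>l\<in>UNIV-{k}. H$k$l * H$l$k / a))"
      by (rule det_arrow[OF a0]) (simp add: H a_def)
    also have "(\<Sum>l\<in>UNIV-{k}. H$k$l * H$l$k / a) = (\<Sum>l\<in>UNIV-{k}. (2 * \<alpha>\<^sup>2 * P) * (x$l)\<^sup>2)"
      by (rule sum.cong) (use Ppos tpos in \<open>auto simp: H a_def power2_eq_square field_simps\<close>)
    also have "\<dots> = 2 * \<alpha>\<^sup>2 * P * A" by (simp add: A_def sum_distrib_left)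
    finally have detH: "det H = a ^ (CARD('n) - 1) * (P * (\<alpha>*(\<alpha>-1) * (A - C) - 2 * \<alpha>\<^sup>2 * A))"
      by (simp add: H algebra_simps)
    have E: "\<alpha>*(\<alpha>-1) * (A - C) - 2 * \<alpha>\<^sup>2 * A \<ge> 1"
    proof -
      have "\<alpha> + \<alpha>\<^sup>2 \<le> 2" using al by (simp add: power2_eq_square) (smt (verit) mult_left_le_one_le)
      moreover have "A \<le> d\<^sup>2" using Abnd[OF closure_subset[THEN subsetD, OF x]] by (simp add: A_def)
      moreover have "A \<ge> 0" using A0 by (simp add: A_def)
      ultimately have "(\<alpha> + \<alpha>\<^sup>2) * A \<le> 2 * d\<^sup>2"
        using mult_mono[of "\<alpha> + \<alpha>\<^sup>2" 2 A "d\<^sup>2"] by simp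
      moreover have "\<alpha>*(\<alpha>-1) * (A - C) - 2 * \<alpha>\<^sup>2 * A = \<alpha> * (1 - \<alpha>) * C - (\<alpha> + \<alpha>\<^sup>2) * A"
        by (simp add: algebra_simps power2_eq_square)
      ultimately show ?thesis using CC by linarith
    qed
    define m where "m = CARD('n) - 1"
    have m1: "m \<ge> 1" unfolding m_def using n2 by simp
    have tp: "t powr (real CARD('n) * \<alpha> - 2) = (P * t * t) ^ m * P"
    proof -
      have "real CARD('n) * \<alpha> - 2 = real m * \<alpha> + (\<alpha> - 2)"
        unfolding m_def using m1[unfolded m_def] by (simp add: of_nat_diff algebra_simps)
      then have "t powr (real CARD('n) * \<alpha> - 2) = t powr (\<alpha> * real m) * P"
        by (simp add: powr_add[symmetric] P_def mult.commute add_diff_eq)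
      also have "t powr (\<alpha> * real m) = (t powr \<alpha>) ^ m"
      proof -
        have "(t powr \<alpha>) powr real m = (t powr \<alpha>) ^ m" using tpos by (intro powr_realpow) simp
        then show ?thesis by (simp add: powr_powr)
      qed
      finally show ?thesis by (simp add: P0)
    qed
    have "2 * (P * t * t) ^ m * P \<le> 2 ^ m * (P * t * t) ^ m * P * 1"
    proof -
      have "(2::real) \<le> 2 ^ m" using m1 by (metis power_increasing power_one_right one_le_numeral)
      moreover have "0 \<le> (P * t * t) ^ m * P" using Ppos tpos by simp
      ultimately show ?thesis using mult_right_mono by (simp add: mult.assoc)
    qed
    also have "\<dots> \<le> 2 ^ m * (P * t * t) ^ m * P * (\<alpha>*(\<alpha>-1) * (A - C) - 2 * \<alpha>\<^sup>2 * A)"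
      using E Ppos tpos by (intro mult_left_mono) auto
    also have "\<dots> = det H" unfolding detH a_def m_def[symmetric]
      by (simp add: power_mult_distrib mult_ac)
    finally show "det (hessian (v_alpha \<Omega> k \<alpha>) x) \<ge> 2 * (x $ k) powr (real CARD('n) * \<alpha> - 2)"
      using tp by (simp add: H_def t_def mult.assoc)
  qed
qed

theorem lemma2p2:
  fixes \<Omega> :: "(real^'n) set" and k :: 'n
  assumes n2: "CARD('n) \<ge> 2"
    and dom: "open \<Omega>" "connected \<Omega>" "\<Omega> \<noteq> {}"
    and bdd: "bounded \<Omega>" and cvx: "convex \<Omega>"
    and bd0: "0 \<in> frontier \<Omega>"
    and half: "\<Omega> \<subseteq> {x. x $ k > 0}"
  shows "(\<forall>\<alpha>\<in>{0<..<1}.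
            convex_on \<Omega> (v_alpha \<Omega> k \<alpha>)
          \<and> (\<forall>x\<in>frontier \<Omega>. v_alpha \<Omega> k \<alpha> x \<le> 0)
          \<and> (\<forall>x\<in>\<Omega>. det (hessian (v_alpha \<Omega> k \<alpha>) x)
                       \<ge> 2 * (x $ k) powr (real CARD('n) * \<alpha> - 2)))
       \<and> (\<forall>p>0. \<forall>x\<in>\<Omega>.
            det (hessian (v_alpha \<Omega> k (2 / (real CARD('n) + p))) x)
              > \<bar>v_alpha \<Omega> k (2 / (real CARD('n) + p)) x\<bar> powr (- p))"
proof (rule conjI)
  show "\<forall>\<alpha>\<in>{0<..<1}.
            convex_on \<Omega> (v_alpha \<Omega> k \<alpha>)
          \<and> (\<forall>x\<in>frontier \<Omega>. v_alpha \<Omega> k \<alpha> x \<le> 0)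
          \<and> (\<forall>x\<in>\<Omega>. det (hessian (v_alpha \<Omega> k \<alpha>) x)
                       \<ge> 2 * (x $ k) powr (real CARD('n) * \<alpha> - 2))"
  proof (rule ballI)
    fix \<alpha> :: real assume "\<alpha> \<in> {0<..<1}"
    then have al: "0 < \<alpha>" "\<alpha> < 1" by auto
    note P = part1[OF bdd cvx bd0 dom(1) half al n2]
    show "convex_on \<Omega> (v_alpha \<Omega> k \<alpha>)
          \<and> (\<forall>x\<in>frontier \<Omega>. v_alpha \<Omega> k \<alpha> x \<le> 0)
          \<and> (\<forall>x\<in>\<Omega>. det (hessian (v_alpha \<Omega> k \<alpha>) x)
                       \<ge> 2 * (x $ k) powr (real CARD('n) * \<alpha> - 2))"
      using P(1-3) by blast
  qed
next
  show "\<forall>p>0. \<forall>x\<in>\<Omega>.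
            det (hessian (v_alpha \<Omega> k (2 / (real CARD('n) + p))) x)
              > \<bar>v_alpha \<Omega> k (2 / (real CARD('n) + p)) x\<bar> powr (- p)"
  proof (intro allI impI ballI)
  fix p :: real and x assume p: "p > 0" and x: "x \<in> \<Omega>"
  define n where "n = real CARD('n)"
  have n2': "n \<ge> 2" using n2 by (simp add: n_def)
  define \<alpha> where "\<alpha> = 2 / (n + p)"
  have al: "0 < \<alpha>" "\<alpha> < 1" using n2' p by (auto simp: \<alpha>_def)
  note P = part1[OF bdd cvx bd0 dom(1) half al n2]
  define t where "t = x$k"
  have tpos: "t > 0" using half x by (auto simp: t_def)
  define A where "A = (\<Sum>l\<in>UNIV-{k}. (x$l)\<^sup>2)"
  define C where "C = C_alpha \<Omega> \<alpha>"
  have CA: "C - A > 1" using P(4) closure_subset x by (auto simp: C_def A_def)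
  have vabs: "\<bar>v_alpha \<Omega> k \<alpha> x\<bar> = t powr \<alpha> * (C - A)"
    using CA by (simp add: v_alpha_def t_def[symmetric] A_def[symmetric] C_def[symmetric] abs_mult)
  have ex: "n * \<alpha> - 2 = \<alpha> * (-p)" using n2' p by (simp add: \<alpha>_def field_simps)
  have "\<bar>v_alpha \<Omega> k \<alpha> x\<bar> powr (- p) = (t powr \<alpha>) powr (-p) * (C - A) powr (-p)"
    unfolding vabs using CA tpos by (simp add: powr_mult)
  also have "(t powr \<alpha>) powr (-p) = t powr (n * \<alpha> - 2)" by (simp add: powr_powr ex)
  also have "(C - A) powr (-p) < 1" using CA p by (intro powr_less_one) auto
  then have "t powr (n * \<alpha> - 2) * (C - A) powr (-p) < t powr (n * \<alpha> - 2) * 1"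
    using tpos by (intro mult_strict_left_mono) auto
  also have "\<dots> < 2 * t powr (n * \<alpha> - 2)" using tpos by simp
  also have "\<dots> \<le> det (hessian (v_alpha \<Omega> k \<alpha>) x)" using P(3) x by (simp add: t_def n_def)
  finally show "det (hessian (v_alpha \<Omega> k (2 / (real CARD('n) + p))) x)
              > \<bar>v_alpha \<Omega> k (2 / (real CARD('n) + p)) x\<bar> powr (- p)"
    by (simp add: \<alpha>_def n_def)
  qed
qed

end
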